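(* Let $a\ge2$ be an integer. Then $$D_{2^a+1}\equiv 3+2^{a+2}\pmod{4^{a+1}}\qquad\text{and}\qquad D_{2^a-1}\equiv -1\pmod{4^{a+1}}.$$
   Context: $D_n=\sum_{k=0}^{n}\binom{n}{k}\binom{n+k}{k}$ are the central Delannoy numbers. *)

theory Defs
  imports Main "HOL-Number_Theory.Cong"
begin

definition delannoy :: "nat \<Rightarrow> nat" where
  "delannoy n = (\<Sum>k=0..n. (n choose k) * ((n + k) choose k))"

end

theory Submission
  imports Defs Complex_Main "HOL-Number_Theory.Cong"
begin


lemma inner_sum:
  assumes "j \<le> n"
  shows "(\<Sum>k\<le>n. (n choose k) * (k choose j)) = (n choose j) * 2 ^ (n - j)"
proof -
  have "(\<Sum>k\<le>n. (n choose k) * (k choose j)) = (\<Sum>k\<in>{j..n}. (n choose k) * (k choose j))"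
    by (rule sum.mono_neutral_right) auto
  also have "\<dots> = (\<Sum>k\<in>{j..n}. (n choose j) * ((n - j) choose (k - j)))"
    by (rule sum.cong) (auto simp: choose_mult)
  also have "\<dots> = (n choose j) * (\<Sum>k\<in>{j..n}. ((n - j) choose (k - j)))"
    by (simp add: sum_distrib_left)
  also have "(\<Sum>k\<in>{j..n}. ((n - j) choose (k - j))) = (\<Sum>i\<le>n-j. ((n - j) choose i))"
  proof -
    have "(\<Sum>i\<le>n-j. ((n - j) choose i)) = (\<Sum>k\<in>(\<lambda>i. i + j) ` {..n-j}. ((n - j) choose (k - j)))"
      by (subst sum.reindex) (auto simp: inj_on_def)
    also have "(\<lambda>i. i + j) ` {..n-j} = {j..n}"
      using assms apply (auto simp: image_iff)
      subgoal for x by (rule bexI[of _ "x - j"]) auto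
      done
    finally show ?thesis by simp
  qed
  also have "\<dots> = 2 ^ (n - j)" by (rule choose_row_sum)
  finally show ?thesis .
qed

lemma delannoy_alt: "delannoy n = (\<Sum>j\<le>n. (n choose j)^2 * 2 ^ j)"
proof -
  have v: "(n + k) choose k = (\<Sum>j\<le>n. (n choose j) * (k choose j))" if "k \<le> n" for k
  proof -
    have "(n + k) choose k = (\<Sum>j\<le>k. (n choose j) * (k choose (k - j)))"
      by (rule vandermonde[symmetric])
    also have "\<dots> = (\<Sum>j\<le>k. (n choose j) * (k choose j))"
      by (rule sum.cong) (auto simp: binomial_symmetric[symmetric])
    also have "\<dots> = (\<Sum>j\<le>n. (n choose j) * (k choose j))"
      by (rule sum.mono_neutral_left) (use that in auto)
    finally show ?thesis .
  qed
  have "delannoy n = (\<Sum>k\<le>n. (n choose k) * ((n + k) choose k))"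
    by (simp add: delannoy_def atLeast0AtMost)
  also have "\<dots> = (\<Sum>k\<le>n. \<Sum>j\<le>n. (n choose j) * ((n choose k) * (k choose j)))"
    by (rule sum.cong) (auto simp: v sum_distrib_left mult.assoc mult.left_commute)
  also have "\<dots> = (\<Sum>j\<le>n. (n choose j) * (\<Sum>k\<le>n. (n choose k) * (k choose j)))"
    by (subst sum.swap) (simp add: sum_distrib_left)
  also have "\<dots> = (\<Sum>j\<le>n. (n choose j)^2 * 2 ^ (n - j))"
    by (rule sum.cong) (auto simp: inner_sum power2_eq_square)
  also have "\<dots> = (\<Sum>j\<le>n. (n choose (n - j))^2 * 2 ^ (n - j))"
    by (rule sum.cong) (auto simp: binomial_symmetric[symmetric])
  also have "\<dots> = (\<Sum>j\<le>n. (n choose j)^2 * 2 ^ j)"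
    using sum.atLeastAtMost_rev[of "\<lambda>j. (n choose j)^2 * 2 ^ j" 0 n]
    by (simp add: atLeast0AtMost)
  finally show ?thesis .
qed


lemma dvd_cancel_pow2:
  fixes i c :: nat
  shows "0 < i \<Longrightarrow> 2^m dvd i * c \<Longrightarrow> i < 2^(L+1) \<Longrightarrow> 2^(m-L) dvd c"
proof (induction L arbitrary: i m)
  case 0
  then have "i = 1" by simp
  with 0 show ?case by simp
next
  case (Suc L)
  show ?case
  proof (cases "even i")
    case False
    then have "coprime (2^m) i" by (simp add: coprime_commute)
    then have "2^m dvd c" using Suc.prems(2) coprime_dvd_mult_right_iff by blast
    then show ?thesis by (rule dvd_trans[rotated]) (simp add: le_imp_power_dvd)
  next
    case True
    then obtain j where j: "i = 2 * j" by blast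
    show ?thesis
    proof (cases m)
      case 0 then show ?thesis by simp
    next
      case (Suc m')
      have "2 * 2^m' dvd 2 * (j * c)" using Suc.prems(2) j Suc by (simp add: mult.assoc)
      then have "2^m' dvd j * c" by simp
      moreover have "0 < j" "j < 2^(L+1)" using Suc.prems j by auto
      ultimately have "2^(m'-L) dvd c" using Suc.IH by blast
      then show ?thesis using Suc by simp
    qed
  qed
qed

lemma pow2_dvd_choose:
  fixes a L i :: nat
  assumes "0 < i" "i < 2^(L+1)" "i \<le> 2^a"
  shows "2^(a-L) dvd (2^a choose i)"
proof -
  have "i * (2^a choose i) = 2^a * ((2^a - 1) choose (i - 1))"
    using Suc_times_binomial[of "i - 1" "2^a - 1"] assms by simp
  then have "2^a dvd i * (2^a choose i)" by simp
  then show ?thesis using dvd_cancel_pow2 assms by blast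
qed


lemma ch_rat:
  "(of_nat (n choose 2)::rat) = of_nat n * (of_nat n - 1) / 2"
  "(of_nat (n choose 3)::rat) = of_nat n * (of_nat n - 1) * (of_nat n - 2) / 6"
  "(of_nat (n choose 4)::rat) = of_nat n * (of_nat n - 1) * (of_nat n - 2) * (of_nat n - 3) / 24"
  "(of_nat (n choose 5)::rat) = of_nat n * (of_nat n - 1) * (of_nat n - 2) * (of_nat n - 3) * (of_nat n - 4) / 120"
  by (simp_all add: binomial_gbinomial gbinomial_prod_rev numeral_eq_Suc prod.atLeast0_lessThan_Suc)

lemma sum5: "(\<Sum>k\<le>5. f k) = f 0 + f 1 + f 2 + f 3 + f (4::nat) + (f 5 :: 'a::comm_monoid_add)"
  by (simp add: numeral_eq_Suc atMost_Suc add_ac)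

lemma head_plus:
  fixes z :: nat
  defines "S \<equiv> (\<Sum>k\<le>5. (2::int)^k * int ((8*z+1) choose k)^2)"
  shows "225 * (S - 3 - 32 * int z) = 256 * int z^2 * (192 + 790*int z + 1020*int z^2 + 13440*int z^3
     + 45056*int z^4 - 368640*int z^5 + 1556480*int z^6 - 2621440*int z^7 + 2097152*int z^8)"
proof -
  let ?q = "of_nat z :: rat"
  have n: "(of_nat (8*z+1) :: rat) = 8*?q + 1" by simp
  have e: "(of_int S :: rat) = 1 + 2 * (8*?q+1)^2 + 4 * ((8*?q+1)*(8*?q)/2)^2
     + 8 * ((8*?q+1)*(8*?q)*(8*?q-1)/6)^2 + 16 * ((8*?q+1)*(8*?q)*(8*?q-1)*(8*?q-2)/24)^2
     + 32 * ((8*?q+1)*(8*?q)*(8*?q-1)*(8*?q-2)*(8*?q-3)/120)^2"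
    proof -
    have c0: "(of_nat ((8*z+1) choose 0) :: rat) = 1" by simp
    have c1: "(of_nat ((8*z+1) choose 1) :: rat) = 8*?q+1" by simp
    have c2: "(of_nat ((8*z+1) choose 2) :: rat) = (8*?q+1)*(8*?q)/2"
      using ch_rat(1)[of "8*z+1"] by (simp only: n) simp
    have c3: "(of_nat ((8*z+1) choose 3) :: rat) = (8*?q+1)*(8*?q)*(8*?q-1)/6"
      using ch_rat(2)[of "8*z+1"] by (simp only: n) simp
    have c4: "(of_nat ((8*z+1) choose 4) :: rat) = (8*?q+1)*(8*?q)*(8*?q-1)*(8*?q-2)/24"
      using ch_rat(3)[of "8*z+1"] by (simp only: n) simp
    have c5: "(of_nat ((8*z+1) choose 5) :: rat) = (8*?q+1)*(8*?q)*(8*?q-1)*(8*?q-2)*(8*?q-3)/120"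
      using ch_rat(4)[of "8*z+1"] by (simp only: n) simp
    show ?thesis unfolding S_def sum5
      by (simp only: of_int_add of_int_mult of_int_power of_int_of_nat_eq of_int_numeral c0 c1 c2 c3 c4 c5) simp
  qed
  have "(of_int (225 * (S - 3 - 32 * int z)) :: rat) = of_int (256 * int z^2 * (192 + 790*int z + 1020*int z^2 + 13440*int z^3
     + 45056*int z^4 - 368640*int z^5 + 1556480*int z^6 - 2621440*int z^7 + 2097152*int z^8))"
    by (simp only: of_int_mult of_int_diff of_int_add e of_int_numeral of_int_of_nat_eq of_int_power) (simp add: divide_simps; algebra)
  then show ?thesis by (simp only: of_int_eq_iff)
qed

lemma head_minus:
  fixes z :: nat
  assumes z: "1 \<le> z"
  defines "T \<equiv> (\<Sum>k\<le>5. (2::int)^k * ((-1)^k * int ((8*z-1) choose k) - 1)^2)"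
  shows "225 * T = 256 * int z^2 * (15422 - 182950*int z + 1050140*int z^2 - 3690880*int z^3
     + 8574976*int z^4 - 13312000*int z^5 + 13352960*int z^6 - 7864320*int z^7 + 2097152*int z^8)"
proof -
  let ?q = "of_nat z :: rat"
  have n: "(of_nat (8*z-1) :: rat) = 8*?q - 1" using z by (simp add: of_nat_diff)
  have e: "(of_int T :: rat) = 0 + 2 * (-(8*?q-1) - 1)^2 + 4 * ((8*?q-1)*(8*?q-2)/2 - 1)^2
     + 8 * (-((8*?q-1)*(8*?q-2)*(8*?q-3)/6) - 1)^2 + 16 * ((8*?q-1)*(8*?q-2)*(8*?q-3)*(8*?q-4)/24 - 1)^2
     + 32 * (-((8*?q-1)*(8*?q-2)*(8*?q-3)*(8*?q-4)*(8*?q-5)/120) - 1)^2"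
  proof -
    have c0: "(of_nat ((8*z-1) choose 0) :: rat) = 1" by simp
    have c1: "(of_nat ((8*z-1) choose 1) :: rat) = 8*?q-1" using n by simp
    have c2: "(of_nat ((8*z-1) choose 2) :: rat) = (8*?q-1)*(8*?q-2)/2"
      using ch_rat(1)[of "8*z-1"] by (simp only: n) simp
    have c3: "(of_nat ((8*z-1) choose 3) :: rat) = (8*?q-1)*(8*?q-2)*(8*?q-3)/6"
      using ch_rat(2)[of "8*z-1"] by (simp only: n) simp
    have c4: "(of_nat ((8*z-1) choose 4) :: rat) = (8*?q-1)*(8*?q-2)*(8*?q-3)*(8*?q-4)/24"
      using ch_rat(3)[of "8*z-1"] by (simp only: n) simp
    have c5: "(of_nat ((8*z-1) choose 5) :: rat) = (8*?q-1)*(8*?q-2)*(8*?q-3)*(8*?q-4)*(8*?q-5)/120"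
      using ch_rat(4)[of "8*z-1"] by (simp only: n) simp
    show ?thesis unfolding T_def sum5
      by (simp only: of_int_add of_int_mult of_int_power of_int_diff of_int_minus of_int_1 of_int_of_nat_eq of_int_numeral c0 c1 c2 c3 c4 c5) simp
  qed
  have "(of_int (225 * T) :: rat) = of_int (256 * int z^2 * (15422 - 182950*int z + 1050140*int z^2 - 3690880*int z^3
     + 8574976*int z^4 - 13312000*int z^5 + 13352960*int z^6 - 7864320*int z^7 + 2097152*int z^8))"
    by (simp only: of_int_mult of_int_diff of_int_add e of_int_numeral of_int_of_nat_eq of_int_power) (simp add: divide_simps; algebra)
  then show ?thesis by (simp only: of_int_eq_iff)
qed


lemma pow_ge: "3 \<le> a \<Longrightarrow> 2*a+2 \<le> (2::nat)^a"
proof (induction a rule: dec_induct)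
  case base then show ?case by simp
next
  case (step n) then show ?case by simp
qed

lemma L_bound: "6 \<le> k \<Longrightarrow> (2::nat)^L \<le> k \<Longrightarrow> 2*L+2 \<le> k"
proof (cases "L \<le> 2")
  case False
  then have "2*L+2 \<le> 2^L" using pow_ge[of L] by simp
  then show "2^L \<le> k \<Longrightarrow> 2*L+2 \<le> k" by simp
qed simp

lemma big_term:
  fixes y :: int
  assumes "2^(a-L) dvd y" "6 \<le> k" "2^L \<le> k" "L \<le> a"
  shows "2^(2*a+2) dvd 2^k * y^2"
proof -
  obtain w where w: "y = 2^(a-L) * w" using assms(1) by blast
  have eq: "2^k * y^2 = 2^(k + 2*(a-L)) * w^2"
    by (simp add: w power_mult_distrib power_add power_mult[symmetric] mult.commute)
  have "2*a+2 \<le> k + 2*(a-L)" using L_bound[OF assms(2,3)] assms(4) by simp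
  then have "(2::int)^(2*a+2) dvd 2^(k + 2*(a-L))" by (rule le_imp_power_dvd)
  then show ?thesis by (simp only: eq) (rule dvd_mult2)
qed

lemma get_L:
  fixes k a :: nat
  assumes "1 \<le> k" "k < 2^a"
  obtains L where "2^L \<le> k" "k < 2^(L+1)" "L \<le> a"
proof -
  obtain L where L: "(2::nat)^L \<le> k" "k < 2^(L+1)" using ex_power_ivl1[of 2 k] assms by auto
  have "(2::nat)^L < 2^a" using L(1) assms(2) by (rule le_less_trans)
  then have "L < a" using power_strict_increasing_iff[of "2::nat" L a] by simp
  then have "L \<le> a" by simp
  then show ?thesis using L that by blast
qed

lemma tail_plus:
  assumes a: "3 \<le> a" and k: "6 \<le> k" "k \<le> 2^a + 1"
  shows "(2::int)^(2*a+2) dvd 2^k * int ((2^a+1) choose k)^2"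
proof (cases "2^a \<le> k")
  case True
  then have "2*a+2 \<le> k" using pow_ge[OF a] by simp
  then have "(2::int)^(2*a+2) dvd 2^k" by (rule le_imp_power_dvd)
  then show ?thesis by (rule dvd_mult2)
next
  case False
  then obtain L where L: "2^L \<le> k" "k < 2^(L+1)" "L \<le> a" using get_L[of k a] k by auto
  obtain j where j: "k = Suc j" using k by (cases k) auto
  have "(2^a+1) choose k = (2^a choose j) + (2^a choose k)" using j by simp
  moreover have "2^(a-L) dvd (2^a choose j)" using pow2_dvd_choose[of j L a] j k L False by simp
  moreover have "2^(a-L) dvd (2^a choose k)" using pow2_dvd_choose[of k L a] j k L False by simp
  ultimately have "2^(a-L) dvd ((2^a+1) choose k)" by simp
  then have "(2::int)^(a-L) dvd int ((2^a+1) choose k)"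
    by (metis int_dvd_int_iff of_nat_numeral of_nat_power)
  then show ?thesis using big_term k L by blast
qed

lemma e_dvd:
  assumes "k < 2^(L+1)" "k < 2^a"
  shows "(2::int)^(a-L) dvd ((-1)^k * int ((2^a-1) choose k) - 1)"
  using assms
proof (induction k)
  case 0 then show ?case by simp
next
  case (Suc k)
  have x: "2^a = Suc (2^a - 1)" by simp
  have "2^a choose Suc k = ((2^a-1) choose k) + ((2^a - 1) choose Suc k)"
    by (subst x) (simp only: binomial_Suc_Suc)
  then have eq: "(-1)^(Suc k) * int ((2^a-1) choose Suc k) - 1
      = (-1)^(Suc k) * int (2^a choose Suc k) + ((-1)^k * int ((2^a-1) choose k) - 1)"
    by (simp add: algebra_simps)
  have "2^(a-L) dvd (2^a choose Suc k)" using pow2_dvd_choose[of "Suc k" L a] Suc.prems by simp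
  then have "(2::int)^(a-L) dvd int (2^a choose Suc k)"
    by (metis int_dvd_int_iff of_nat_numeral of_nat_power)
  moreover have "(2::int)^(a-L) dvd ((-1)^k * int ((2^a-1) choose k) - 1)"
    using Suc.IH Suc.prems by simp
  ultimately show ?case by (simp only: eq) (simp add: dvd_add)
qed

lemma tail_minus:
  assumes a: "3 \<le> a" and k: "6 \<le> k" "k \<le> 2^a - 1"
  shows "(2::int)^(2*a+2) dvd 2^k * ((-1)^k * int ((2^a-1) choose k) - 1)^2"
proof -
  have "k < 2^a" using k by (metis diff_le_self le_neq_implies_less less_imp_diff_less not_less one_le_numeral one_le_power order.strict_trans2 diff_less zero_less_one) 
  then obtain L where L: "2^L \<le> k" "k < 2^(L+1)" "L \<le> a" using get_L[of k a] k by auto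
  show ?thesis using big_term[OF e_dvd[OF L(2) \<open>k < 2^a\<close>]] k L by blast
qed


lemma cop225: "coprime (225::int) (2^n)" by simp

lemma plus_main:
  assumes a: "3 \<le> a"
  shows "[int (delannoy (2^a+1)) = 3 + 2^(a+2)] (mod (2^(2*a+2)))"
proof -
  define z :: nat where "z = 2^(a-3)"
  have a3: "a = 3 + (a-3)" using a by simp
  have xz: "(2::nat)^a = 8*z" unfolding z_def by (subst a3) (simp only: power_add, simp)
  have "(2::int)^(2*a+2) = 2^(8 + 2*(a-3))" using a by (simp add: algebra_simps)
  also have "\<dots> = 256 * ((2::int)^(a-3))^2" by (simp only: power_add power_even_eq) simp
  finally have P: "(2::int)^(2*a+2) = 256 * int z^2" unfolding z_def by simp
  have D: "int (delannoy (2^a+1)) = (\<Sum>k\<le>2^a+1. 2^k * int ((2^a+1) choose k)^2)"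
    by (simp add: delannoy_alt of_nat_sum mult.commute)
  have x6: "6 \<le> (2::nat)^a + 1" using pow_ge[OF a] a by linarith
  have split: "{..(2::nat)^a+1} = {..5} \<union> {6..2^a+1}" using x6 by auto
  have D2: "int (delannoy (2^a+1)) = (\<Sum>k\<le>5. 2^k * int ((2^a+1) choose k)^2)
       + (\<Sum>k\<in>{6..2^a+1}. 2^k * int ((2^a+1) choose k)^2)"
    unfolding D split by (rule sum.union_disjoint) auto
  have tail: "(2::int)^(2*a+2) dvd (\<Sum>k\<in>{6..2^a+1}. 2^k * int ((2^a+1) choose k)^2)"
    by (rule dvd_sum) (use tail_plus[OF a] in auto)
  have "225 * ((\<Sum>k\<le>5. 2^k * int ((2^a+1) choose k)^2) - 3 - 32 * int z) = 256 * int z^2 * (192 + 790*int z + 1020*int z^2 + 13440*int z^3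
     + 45056*int z^4 - 368640*int z^5 + 1556480*int z^6 - 2621440*int z^7 + 2097152*int z^8)"
    unfolding xz by (rule head_plus)
  then have "(2::int)^(2*a+2) dvd 225 * ((\<Sum>k\<le>5. 2^k * int ((2^a+1) choose k)^2) - 3 - 32 * int z)"
    unfolding P by simp
  then have head: "(2::int)^(2*a+2) dvd ((\<Sum>k\<le>5. 2^k * int ((2^a+1) choose k)^2) - 3 - 32 * int z)"
    using cop225 coprime_dvd_mult_right_iff coprime_commute by blast
  have "(2::int)^(a+2) = 32 * int z" using xz
    by (simp add: power_add) (metis of_nat_mult of_nat_numeral of_nat_power)
  then have "int (delannoy (2^a+1)) - (3 + 2^(a+2)) = 
       ((\<Sum>k\<le>5. 2^k * int ((2^a+1) choose k)^2) - 3 - 32 * int z) + (\<Sum>k\<in>{6..2^a+1}. 2^k * int ((2^a+1) choose k)^2)"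
    unfolding D2 by simp
  then show ?thesis unfolding cong_iff_dvd_diff using dvd_add[OF head tail] by metis
qed

lemma minus_main:
  assumes a: "3 \<le> a"
  shows "[int (delannoy (2^a-1)) = -1] (mod (2^(2*a+2)))"
proof -
  define z :: nat where "z = 2^(a-3)"
  have a3: "a = 3 + (a-3)" using a by simp
  have xz: "(2::nat)^a = 8*z" unfolding z_def by (subst a3) (simp only: power_add, simp)
  have z1: "1 \<le> z" unfolding z_def by simp
  have "(2::int)^(2*a+2) = 2^(8 + 2*(a-3))" using a by (simp add: algebra_simps)
  also have "\<dots> = 256 * ((2::int)^(a-3))^2" by (simp only: power_add power_even_eq) simp
  finally have P: "(2::int)^(2*a+2) = 256 * int z^2" unfolding z_def by simp
  define n :: nat where "n = 2^a - 1"
  have n1: "n + 1 = 2^a" unfolding n_def by simp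
  have nodd: "odd n" unfolding n_def using a by (simp add: odd_pos)
  define c where "c k = int (n choose k)" for k
  define e where "e k = (-1)^k * c k - 1" for k
  have D: "int (delannoy n) = (\<Sum>k\<le>n. 2^k * c k^2)"
    by (simp add: delannoy_alt of_nat_sum mult.commute c_def)
  have tm: "2^k * c k^2 = 2 * ((-2)^k * c k) - 2^k + 2^k * e k^2" for k
  proof -
    have "((-1::int)^k)^2 = 1" by (simp flip: power_mult)
    then show ?thesis unfolding e_def power2_eq_square
      by (simp add: algebra_simps power_mult_distrib[symmetric])
  qed
  have A: "(\<Sum>k\<le>n. (-2)^k * c k) = -1"
  proof -
    have "(-2 + 1::int)^n = (\<Sum>k\<le>n. of_nat (n choose k) * (-2)^k * 1^(n-k))"
      by (rule binomial_ring)
    then show ?thesis using nodd by (simp add: c_def mult.commute)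
  qed
  have B: "(\<Sum>k\<le>n. (2::int)^k) = 2^(n+1) - 1" by (induction n) auto
  have D1: "int (delannoy n) = 2 * (\<Sum>k\<le>n. (-2)^k * c k) - (\<Sum>k\<le>n. (2::int)^k) + (\<Sum>k\<le>n. 2^k * e k^2)"
    unfolding D tm by (simp add: sum.distrib sum_subtractf sum_distrib_left)
  have x6: "6 \<le> n" using pow_ge[OF a] a n1 by linarith
  have split: "{..n} = {..5} \<union> {6..n}" using x6 by auto
  have E: "(\<Sum>k\<le>n. 2^k * e k^2) = (\<Sum>k\<le>5. 2^k * e k^2) + (\<Sum>k\<in>{6..n}. 2^k * e k^2)"
    unfolding split by (rule sum.union_disjoint) auto
  have tail: "(2::int)^(2*a+2) dvd (\<Sum>k\<in>{6..n}. 2^k * e k^2)"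
    by (rule dvd_sum) (use tail_minus[OF a] in \<open>auto simp: e_def c_def n_def\<close>)
  have "225 * (\<Sum>k\<le>5. 2^k * e k^2) = 256 * int z^2 * (15422 - 182950*int z + 1050140*int z^2 - 3690880*int z^3
     + 8574976*int z^4 - 13312000*int z^5 + 13352960*int z^6 - 7864320*int z^7 + 2097152*int z^8)"
    unfolding e_def c_def n_def xz by (rule head_minus[OF z1])
  then have "(2::int)^(2*a+2) dvd 225 * (\<Sum>k\<le>5. 2^k * e k^2)"
    unfolding P by simp
  then have head: "(2::int)^(2*a+2) dvd (\<Sum>k\<le>5. 2^k * e k^2)"
    using cop225 coprime_dvd_mult_right_iff coprime_commute by blast
  have "2*a+2 \<le> n+1" using pow_ge[OF a] n1 by simp
  then have X: "(2::int)^(2*a+2) dvd 2^(n+1)" by (rule le_imp_power_dvd)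
  have "int (delannoy n) - (-1) = (\<Sum>k\<le>5. 2^k * e k^2) + (\<Sum>k\<in>{6..n}. 2^k * e k^2) - 2^(n+1)"
    unfolding D1 A B E by simp
  then have "[int (delannoy n) = -1] (mod (2^(2*a+2)))"
    unfolding cong_iff_dvd_diff using dvd_diff[OF dvd_add[OF head tail] X] by metis
  then show ?thesis unfolding n_def .
qed

lemma d5: "delannoy 5 = 1683" by (simp add: delannoy_def numeral_eq_Suc)
lemma d3: "delannoy 3 = 63" by (simp add: delannoy_def numeral_eq_Suc)

theorem theorem3p1:
  fixes a :: nat
  assumes "a \<ge> 2"
  shows "[int (delannoy (2 ^ a + 1)) = 3 + 2 ^ (a + 2)] (mod (4 ^ (a + 1)))
       \<and> [int (delannoy (2 ^ a - 1)) = - 1] (mod (4 ^ (a + 1)))"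
proof (cases "a = 2")
  case True
  then show ?thesis by (simp add: d5 d3 cong_iff_dvd_diff)
next
  case False
  then have a: "3 \<le> a" using assms by simp
  have "(4::int)^(a+1) = 2^(2*(a+1))" by (simp only: power_mult) simp
  then have "(4::int)^(a+1) = 2^(2*a+2)" by simp
  then show ?thesis using plus_main[OF a] minus_main[OF a] by simp
qed

end
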